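(* Let $(G,\cdot)$ be a group of nilpotence class (at most) two. For $n\in\mathbb{Z}$ define $g\circ_n h=g\cdot g^{n}\cdot h\cdot g^{-n}$, which equals $g\cdot h\cdot[g,h]^{n}$. Then $(\circ_n: n\in\mathbb{Z})$ is a brace block on $G$.
   Context: Commutator convention: $[x,y]=x y x^{-1}y^{-1}$ (so that $g^n h g^{-n}=h[h^{-1},g^n]$). A skew brace is a triple $(G,\cdot,\circ)$ where $(G,\cdot)$ and $(G,\circ)$ are groups and $g\circ(h\cdot k)=(g\circ h)\cdot g^{-1}\cdot(g\circ k)$ for all $g,h,k$. A bi-skew brace is a triple $(G,\cdot,\circ)$ such that both $(G,\cdot,\circ)$ and $(G,\circ,\cdot)$ are skew braces. A brace block on a set $G$ is a family $\mathcal{F}$ of group operations on $G$ such that $(G,\circ,\diamond)$ is a bi-skew brace for all $\circ,\diamond\in\mathcal{F}$. *)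

theory Defs
  imports "HOL-Algebra.Group"
begin

definition grp :: "'a set \<Rightarrow> ('a \<Rightarrow> 'a \<Rightarrow> 'a) \<Rightarrow> 'a monoid" where
  "grp S f = \<lparr>carrier = S, mult = f,
     one = (THE e. e \<in> S \<and> (\<forall>x\<in>S. f e x = x \<and> f x e = x))\<rparr>"

definition group_op :: "'a set \<Rightarrow> ('a \<Rightarrow> 'a \<Rightarrow> 'a) \<Rightarrow> bool" where
  "group_op S f \<longleftrightarrow> group (grp S f)"

definition skew_brace :: "'a set \<Rightarrow> ('a \<Rightarrow> 'a \<Rightarrow> 'a) \<Rightarrow> ('a \<Rightarrow> 'a \<Rightarrow> 'a) \<Rightarrow> bool" where
  "skew_brace S dot circ \<longleftrightarrow> group_op S dot \<and> group_op S circ \<and>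
     (\<forall>g\<in>S. \<forall>h\<in>S. \<forall>k\<in>S.
        circ g (dot h k) = dot (dot (circ g h) (inv\<^bsub>grp S dot\<^esub> g)) (circ g k))"

definition bi_skew_brace :: "'a set \<Rightarrow> ('a \<Rightarrow> 'a \<Rightarrow> 'a) \<Rightarrow> ('a \<Rightarrow> 'a \<Rightarrow> 'a) \<Rightarrow> bool" where
  "bi_skew_brace S dot circ \<longleftrightarrow> skew_brace S dot circ \<and> skew_brace S circ dot"

definition brace_block :: "'a set \<Rightarrow> ('a \<Rightarrow> 'a \<Rightarrow> 'a) set \<Rightarrow> bool" where
  "brace_block S F \<longleftrightarrow> (\<forall>f\<in>F. \<forall>f'\<in>F. bi_skew_brace S f f')"

definition commutator :: "('a, 'b) monoid_scheme \<Rightarrow> 'a \<Rightarrow> 'a \<Rightarrow> 'a" where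
  "commutator G x y = x \<otimes>\<^bsub>G\<^esub> y \<otimes>\<^bsub>G\<^esub> inv\<^bsub>G\<^esub> x \<otimes>\<^bsub>G\<^esub> inv\<^bsub>G\<^esub> y"

definition nilpotent_class_le_2 :: "('a, 'b) monoid_scheme \<Rightarrow> bool" where
  "nilpotent_class_le_2 G \<longleftrightarrow> (\<forall>x\<in>carrier G. \<forall>y\<in>carrier G. \<forall>z\<in>carrier G.
      commutator G x y \<otimes>\<^bsub>G\<^esub> z = z \<otimes>\<^bsub>G\<^esub> commutator G x y)"

definition circ_n :: "('a, 'b) monoid_scheme \<Rightarrow> int \<Rightarrow> 'a \<Rightarrow> 'a \<Rightarrow> 'a" where
  "circ_n G n g h = g \<otimes>\<^bsub>G\<^esub> (g [^]\<^bsub>G\<^esub> n) \<otimes>\<^bsub>G\<^esub> h \<otimes>\<^bsub>G\<^esub> (g [^]\<^bsub>G\<^esub> (- n))"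

end

theory Submission imports Defs begin

locale nil2 = group G for G (structure) +
  assumes cc: "\<lbrakk>x\<in>carrier G; y\<in>carrier G; z\<in>carrier G\<rbrakk> \<Longrightarrow>
     commutator G x y \<otimes> z = z \<otimes> commutator G x y"
begin

abbreviation C where "C \<equiv> commutator G"

definition cent where "cent z \<longleftrightarrow> z \<in> carrier G \<and> (\<forall>x\<in>carrier G. z \<otimes> x = x \<otimes> z)"

lemma C_closed[simp]: "x \<in> carrier G \<Longrightarrow> y \<in> carrier G \<Longrightarrow> C x y \<in> carrier G"
  by (simp add: commutator_def)

lemma C_cent[simp]: "x \<in> carrier G \<Longrightarrow> y \<in> carrier G \<Longrightarrow> cent (C x y)"
  using cc by (simp add: cent_def)

lemma inv_cancel_l[simp]: "x \<in> carrier G \<Longrightarrow> y \<in> carrier G \<Longrightarrow> inv x \<otimes> (x \<otimes> y) = y"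
  by (simp add: m_assoc[symmetric])
lemma inv_cancel_r[simp]: "x \<in> carrier G \<Longrightarrow> y \<in> carrier G \<Longrightarrow> x \<otimes> (inv x \<otimes> y) = y"
  by (simp add: m_assoc[symmetric])

lemma cent_carrier: "cent z \<Longrightarrow> z \<in> carrier G" by (simp add: cent_def)

lemma cent_comm: "cent z \<Longrightarrow> x \<in> carrier G \<Longrightarrow> x \<otimes> z = z \<otimes> x"
  unfolding cent_def by (metis)

lemma cent_lcomm: "cent z \<Longrightarrow> x \<in> carrier G \<Longrightarrow> y \<in> carrier G \<Longrightarrow> x \<otimes> (z \<otimes> y) = z \<otimes> (x \<otimes> y)"
  using cent_comm[of z x] by (simp add: cent_carrier m_assoc[symmetric])

lemma cent_mult[simp]: assumes a: "cent a" and b: "cent b" shows "cent (a \<otimes> b)"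
proof -
  have ac: "a \<in> carrier G" and bc: "b \<in> carrier G" using a b by (simp_all add: cent_carrier)
  { fix x assume x: "x \<in> carrier G"
    have "a \<otimes> b \<otimes> x = a \<otimes> (x \<otimes> b)" using b x ac bc by (simp add: m_assoc cent_comm[of b x])
    also have "\<dots> = (a \<otimes> x) \<otimes> b" using x ac bc by (simp add: m_assoc)
    also have "\<dots> = (x \<otimes> a) \<otimes> b" using a x by (simp add: cent_comm[of a x])
    also have "\<dots> = x \<otimes> (a \<otimes> b)" using x ac bc by (simp add: m_assoc)
    finally have "a \<otimes> b \<otimes> x = x \<otimes> (a \<otimes> b)" . }
  then show ?thesis using ac bc by (simp add: cent_def)
qed

lemma cent_inv[simp]: assumes a: "cent a" shows "cent (inv a)"
proof -
  have ac: "a \<in> carrier G" using a by (simp add: cent_carrier)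
  { fix x assume x: "x \<in> carrier G"
    have "inv a \<otimes> x = inv (inv x \<otimes> a)" using x ac by (simp add: inv_mult_group)
    also have "\<dots> = inv (a \<otimes> inv x)" using a x by (simp add: cent_comm[of a "inv x"])
    also have "\<dots> = x \<otimes> inv a" using x ac by (simp add: inv_mult_group)
    finally have "inv a \<otimes> x = x \<otimes> inv a" . }
  then show ?thesis using ac by (simp add: cent_def)
qed

lemma cent_one[simp]: "cent \<one>" by (simp add: cent_def)

lemma swap: "x \<in> carrier G \<Longrightarrow> y \<in> carrier G \<Longrightarrow> x \<otimes> y = C x y \<otimes> (y \<otimes> x)"
  by (simp add: commutator_def m_assoc)

lemma C_cent_left: "cent z \<Longrightarrow> y \<in> carrier G \<Longrightarrow> C z y = \<one>"
  unfolding commutator_def using cent_comm[of z y, symmetric] by (simp add: cent_carrier m_assoc)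

lemma C_cent_right: "cent z \<Longrightarrow> y \<in> carrier G \<Longrightarrow> C y z = \<one>"
  unfolding commutator_def by (metis cent_def inv_closed m_assoc r_inv r_one)

lemma C_mult_left: assumes x: "x \<in> carrier G" and y: "y \<in> carrier G" and z: "z \<in> carrier G"
  shows "C (x \<otimes> y) z = C x z \<otimes> C y z"
proof -
  have e: "y \<otimes> z \<otimes> inv y = C y z \<otimes> z"
    using y z by (simp add: commutator_def m_assoc)
  have "C (x \<otimes> y) z = x \<otimes> (y \<otimes> z \<otimes> inv y) \<otimes> inv x \<otimes> inv z"
    using x y z by (simp add: commutator_def m_assoc inv_mult_group)
  also have "\<dots> = x \<otimes> (C y z \<otimes> z) \<otimes> inv x \<otimes> inv z" by (simp add: e)
  also have "\<dots> = C y z \<otimes> (x \<otimes> z \<otimes> inv x \<otimes> inv z)"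
    using x y z by (simp add: m_assoc cent_lcomm[of "C y z" x])
  also have "\<dots> = C y z \<otimes> C x z"
    using x y z by (simp add: commutator_def m_assoc)
  also have "\<dots> = C x z \<otimes> C y z"
    using x y z by (intro cent_comm) simp_all
  finally show ?thesis .
qed

lemma C_inv_left: "x \<in> carrier G \<Longrightarrow> z \<in> carrier G \<Longrightarrow> C (inv x) z = inv (C x z)"
  by (metis C_closed C_cent_left C_mult_left cent_one inv_closed inv_equality l_inv one_closed)

lemma C_anti: "x \<in> carrier G \<Longrightarrow> y \<in> carrier G \<Longrightarrow> C y x = inv (C x y)"
  by (rule inv_equality[symmetric]) (simp_all add: commutator_def m_assoc)

lemma C_mult_right: assumes "x \<in> carrier G" "y \<in> carrier G" "z \<in> carrier G"
  shows "C x (y \<otimes> z) = C x y \<otimes> C x z"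
proof -
  have "C x (y \<otimes> z) = inv (C (y \<otimes> z) x)" using assms by (intro C_anti) simp_all
  also have "\<dots> = inv (C z x) \<otimes> inv (C y x)" using assms by (simp add: C_mult_left inv_mult_group)
  also have "\<dots> = C x z \<otimes> C x y" using assms by (simp add: C_anti[of x])
  also have "\<dots> = C x y \<otimes> C x z" using assms by (intro cent_comm) simp_all
  finally show ?thesis .
qed

lemma C_inv_right: "x \<in> carrier G \<Longrightarrow> z \<in> carrier G \<Longrightarrow> C z (inv x) = inv (C z x)"
  by (metis C_anti C_inv_left inv_closed)

lemma C_pow_nat: assumes x: "x \<in> carrier G" and y: "y \<in> carrier G"
  shows "C (x [^] (n::nat)) y = C x y [^] n"
proof (induction n)
  case 0 then show ?case using y by (simp add: C_cent_left)
next
  case (Suc n)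
  have "C (x [^] Suc n) y = C (x [^] n \<otimes> x) y" by simp
  also have "\<dots> = C (x [^] n) y \<otimes> C x y" using x y by (intro C_mult_left) simp_all
  also have "\<dots> = C x y [^] Suc n" using Suc by simp
  finally show ?case .
qed

lemma C_pow: assumes x: "x \<in> carrier G" and y: "y \<in> carrier G"
  shows "C (x [^] (n::int)) y = C x y [^] n"
proof (cases n rule: int_cases)
  case (nonneg m) then show ?thesis
    using C_pow_nat[OF x y, of m] by (simp add: int_pow_int)
next
  case (neg m)
  have "C (x [^] n) y = C (inv (x [^] Suc m)) y" using neg x by (simp add: int_pow_neg_int del: of_nat_Suc)
  also have "\<dots> = inv (C (x [^] Suc m) y)" using x y by (intro C_inv_left) simp_all
  also have "\<dots> = C x y [^] n" using neg x y C_pow_nat[OF x y, of "Suc m"]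
    by (simp add: int_pow_neg_int del: of_nat_Suc)
  finally show ?thesis .
qed

lemma cent_Cpow[simp]: "x \<in> carrier G \<Longrightarrow> y \<in> carrier G \<Longrightarrow> cent (C x y [^] (n::int))"
  by (metis C_cent C_pow int_pow_closed)

lemma cent_pow_distrib: "cent a \<Longrightarrow> cent b \<Longrightarrow> (a \<otimes> b) [^] (n::int) = a [^] n \<otimes> b [^] n"
  by (simp add: cent_carrier cent_comm int_pow_mult_distrib)

definition F where "F n g h = g \<otimes> h \<otimes> C g h [^] (n::int)"

lemma F_closed[simp]: "g \<in> carrier G \<Longrightarrow> h \<in> carrier G \<Longrightarrow> F n g h \<in> carrier G"
  by (simp add: F_def)

lemma circ_F: assumes g: "g \<in> carrier G" and h: "h \<in> carrier G"
  shows "circ_n G n g h = F n g h"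
proof -
  define p where "p = g [^] n"
  have p: "p \<in> carrier G" using g by (simp add: p_def)
  have e: "p \<otimes> h \<otimes> inv p = C p h \<otimes> h" using p h by (simp add: commutator_def m_assoc)
  have "circ_n G n g h = g \<otimes> (p \<otimes> h \<otimes> inv p)"
    using g h p by (simp add: circ_n_def p_def int_pow_neg m_assoc)
  also have "\<dots> = g \<otimes> (C p h \<otimes> h)" by (simp add: e)
  also have "\<dots> = g \<otimes> h \<otimes> C p h" using g h p
    by (simp add: m_assoc cent_comm[of "C p h" h])
  finally show ?thesis using g h by (simp add: F_def p_def C_pow)
qed

lemma mv_right: "cent z \<Longrightarrow> x \<in> carrier G \<Longrightarrow> y \<in> carrier G \<Longrightarrow> x \<otimes> z \<otimes> y = x \<otimes> y \<otimes> z"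
  using cent_comm[of z y] by (simp add: cent_carrier m_assoc)

lemma C_self[simp]: "x \<in> carrier G \<Longrightarrow> C x x = \<one>"
  by (simp add: commutator_def m_assoc)

lemma F_assoc: assumes g: "g \<in> carrier G" and h: "h \<in> carrier G" and k: "k \<in> carrier G"
  shows "F n (F n g h) k = F n g (F n h k)"
proof -
  define A where "A = C g h [^] n"
  define B where "B = C g k [^] n"
  define D where "D = C h k [^] n"
  have cA: "cent A" and cB: "cent B" and cD: "cent D" using g h k by (simp_all add: A_def B_def D_def)
  have Ac: "A \<in> carrier G" and Bc: "B \<in> carrier G" and Dc: "D \<in> carrier G"
    using cA cB cD by (simp_all add: cent_carrier)
  have c1: "C (g \<otimes> h \<otimes> A) k = C g k \<otimes> C h k"
    using g h k cA Ac by (simp add: C_mult_left C_cent_left)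
  have c2: "C g (h \<otimes> (k \<otimes> D)) = C g h \<otimes> C g k"
    using g h k cD Dc by (simp add: C_mult_right C_cent_right)
  have "F n (F n g h) k = g \<otimes> h \<otimes> A \<otimes> k \<otimes> (B \<otimes> D)"
    using g h k Ac by (simp add: F_def A_def[symmetric] c1 cent_pow_distrib B_def D_def)
  also have "\<dots> = g \<otimes> h \<otimes> k \<otimes> (A \<otimes> (B \<otimes> D))"
    using g h k Ac Bc Dc cA by (simp add: m_assoc cent_lcomm[of A k])
  also have "\<dots> = g \<otimes> h \<otimes> k \<otimes> (D \<otimes> (A \<otimes> B))"
  proof -
    have "A \<otimes> (B \<otimes> D) = D \<otimes> (A \<otimes> B)"
      using Ac Bc Dc cD cent_comm[of D "A \<otimes> B"] by (simp add: m_assoc)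
    then show ?thesis by simp
  qed
  also have "\<dots> = F n g (F n h k)"
    using g h k Ac Bc Dc by (simp add: F_def D_def[symmetric] c2 cent_pow_distrib A_def B_def m_assoc)
  finally show ?thesis .
qed

lemma cent5: assumes "cent a" "cent p" "cent q" "cent r" "cent s"
  shows "inv a \<otimes> (a \<otimes> (p \<otimes> q) \<otimes> r \<otimes> (inv q \<otimes> s)) = s \<otimes> (p \<otimes> r)"
proof -
  have c: "a \<in> carrier G" "p \<in> carrier G" "q \<in> carrier G" "r \<in> carrier G" "s \<in> carrier G"
    using assms by (simp_all add: cent_carrier)
  have "inv a \<otimes> (a \<otimes> (p \<otimes> q) \<otimes> r \<otimes> (inv q \<otimes> s)) = p \<otimes> (q \<otimes> r) \<otimes> (inv q \<otimes> s)"
    using c by (simp add: m_assoc)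
  also have "\<dots> = p \<otimes> (r \<otimes> q) \<otimes> (inv q \<otimes> s)"
    using c assms by (simp add: cent_comm[of r q])
  also have "\<dots> = p \<otimes> r \<otimes> s" using c by (simp add: m_assoc)
  also have "\<dots> = s \<otimes> (p \<otimes> r)" using c assms by (simp add: cent_comm[of s "p \<otimes> r"])
  finally show ?thesis .
qed

lemma F_skew: assumes g: "g \<in> carrier G" and h: "h \<in> carrier G" and k: "k \<in> carrier G"
  shows "F m g (F n h k) = F n (F n (F m g h) (inv g)) (F m g k)"
proof -
  define a where "a = C g h"
  define Am where "Am = C g h [^] m"
  define An where "An = C g h [^] n"
  define Bm where "Bm = C g k [^] m"
  define Dn where "Dn = C h k [^] n"
  have cs: "cent a" "cent Am" "cent An" "cent Bm" "cent Dn"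
    using g h k by (simp_all add: a_def Am_def An_def Bm_def Dn_def)
  have cc: "a \<in> carrier G" "Am \<in> carrier G" "An \<in> carrier G" "Bm \<in> carrier G" "Dn \<in> carrier G"
    using cs by (simp_all add: cent_carrier)
  have c1: "C g (h \<otimes> (k \<otimes> Dn)) = C g h \<otimes> C g k"
    using g h k cs cc by (simp add: C_mult_right C_cent_right)
  have L: "F m g (F n h k) = g \<otimes> h \<otimes> k \<otimes> (Dn \<otimes> (Am \<otimes> Bm))"
    using g h k cc by (simp add: F_def Dn_def[symmetric] c1 cent_pow_distrib Am_def Bm_def m_assoc)
  have c2: "C (g \<otimes> h \<otimes> Am) (inv g) = a"
  proof -
    have "C (g \<otimes> h \<otimes> Am) (inv g) = C g (inv g) \<otimes> C h (inv g) \<otimes> C Am (inv g)"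
      using g h cc by (simp add: C_mult_left)
    also have "\<dots> = C h (inv g)" using g h cs cc by (simp add: C_cent_left C_inv_right)
    also have "\<dots> = inv (C h g)" using g h by (simp add: C_inv_right)
    also have "\<dots> = a" using g h by (simp add: C_anti[of g h] a_def)
    finally show ?thesis .
  qed
  have ghg: "g \<otimes> h \<otimes> inv g = a \<otimes> h"
    using g h by (simp add: a_def commutator_def m_assoc)
  define W where "W = a \<otimes> (Am \<otimes> An)"
  have cW: "cent W" using cs by (simp add: W_def)
  have Wc: "W \<in> carrier G" using cW by (simp add: cent_carrier)
  have U: "F n (F m g h) (inv g) = h \<otimes> W"
  proof -
    have "F n (F m g h) (inv g) = g \<otimes> h \<otimes> Am \<otimes> inv g \<otimes> An"
      using g h by (simp add: F_def Am_def[symmetric] c2 An_def a_def)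
    also have "\<dots> = g \<otimes> h \<otimes> inv g \<otimes> Am \<otimes> An"
      using g h cs cc by (simp add: mv_right[of Am "g \<otimes> h" "inv g"])
    also have "\<dots> = a \<otimes> h \<otimes> Am \<otimes> An" by (simp add: ghg)
    also have "\<dots> = h \<otimes> W"
      using h cs cc by (simp add: W_def m_assoc cent_lcomm[of a h])
    finally show ?thesis .
  qed
  have c3: "C (h \<otimes> W) (g \<otimes> k \<otimes> Bm) = inv a \<otimes> C h k"
  proof -
    have "C (h \<otimes> W) (g \<otimes> k \<otimes> Bm) = C h (g \<otimes> k \<otimes> Bm)"
      using g h k cW Wc cc by (simp add: C_mult_left C_cent_left)
    also have "\<dots> = C h g \<otimes> C h k"
      using g h k cs cc by (simp add: C_mult_right C_cent_right)
    also have "\<dots> = inv a \<otimes> C h k" using g h by (simp add: C_anti[of g h] a_def)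
    finally show ?thesis .
  qed
  have Fk: "F m g k = g \<otimes> k \<otimes> Bm" by (simp add: F_def Bm_def)
  have "F n (F n (F m g h) (inv g)) (F m g k) = h \<otimes> W \<otimes> (g \<otimes> k \<otimes> Bm) \<otimes> (inv An \<otimes> Dn)"
    unfolding U Fk
    using g h k cs cc by (simp add: F_def Bm_def[symmetric] c3 cent_pow_distrib int_pow_inv An_def a_def Dn_def)
  also have "\<dots> = h \<otimes> g \<otimes> k \<otimes> (W \<otimes> Bm \<otimes> (inv An \<otimes> Dn))"
    using g h k cs cc Wc cW by (simp add: m_assoc cent_lcomm[of W g] cent_lcomm[of W k])
  also have "\<dots> = inv a \<otimes> (g \<otimes> h) \<otimes> k \<otimes> (W \<otimes> Bm \<otimes> (inv An \<otimes> Dn))"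
    using g h by (simp add: swap[of h g] C_anti[of g h] a_def)
  also have "\<dots> = g \<otimes> h \<otimes> k \<otimes> (inv a \<otimes> (W \<otimes> Bm \<otimes> (inv An \<otimes> Dn)))"
    using g h k cs cc Wc by (simp add: m_assoc cent_lcomm[of "inv a"])
  also have "\<dots> = g \<otimes> h \<otimes> k \<otimes> (Dn \<otimes> (Am \<otimes> Bm))"
    using cs by (simp add: W_def cent5)
  finally show ?thesis using L by simp
qed

lemma grp_one: "(THE e. e \<in> carrier G \<and> (\<forall>x\<in>carrier G. circ_n G n e x = x \<and> circ_n G n x e = x)) = \<one>"
proof (rule the_equality)
  show "\<one> \<in> carrier G \<and> (\<forall>x\<in>carrier G. circ_n G n \<one> x = x \<and> circ_n G n x \<one> = x)"
    by (simp add: circ_F F_def C_cent_left C_cent_right)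
next
  fix e assume "e \<in> carrier G \<and> (\<forall>x\<in>carrier G. circ_n G n e x = x \<and> circ_n G n x e = x)"
  then have e: "e \<in> carrier G" and "circ_n G n e \<one> = \<one>" by auto
  then show "e = \<one>" by (simp add: circ_F F_def C_cent_right)
qed

lemma group_F: "group (grp (carrier G) (circ_n G n))"
proof (rule groupI)
  show "\<one>\<^bsub>grp (carrier G) (circ_n G n)\<^esub> \<in> carrier (grp (carrier G) (circ_n G n))"
    by (simp add: grp_def grp_one)
next
  fix x y assume "x \<in> carrier (grp (carrier G) (circ_n G n))" "y \<in> carrier (grp (carrier G) (circ_n G n))"
  then show "x \<otimes>\<^bsub>grp (carrier G) (circ_n G n)\<^esub> y \<in> carrier (grp (carrier G) (circ_n G n))"
    by (simp add: grp_def circ_F)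
next
  fix x y z assume "x \<in> carrier (grp (carrier G) (circ_n G n))" "y \<in> carrier (grp (carrier G) (circ_n G n))"
    "z \<in> carrier (grp (carrier G) (circ_n G n))"
  then show "x \<otimes>\<^bsub>grp (carrier G) (circ_n G n)\<^esub> y \<otimes>\<^bsub>grp (carrier G) (circ_n G n)\<^esub> z =
       x \<otimes>\<^bsub>grp (carrier G) (circ_n G n)\<^esub> (y \<otimes>\<^bsub>grp (carrier G) (circ_n G n)\<^esub> z)"
    by (simp add: grp_def circ_F F_assoc)
next
  fix x assume "x \<in> carrier (grp (carrier G) (circ_n G n))"
  then show "\<one>\<^bsub>grp (carrier G) (circ_n G n)\<^esub> \<otimes>\<^bsub>grp (carrier G) (circ_n G n)\<^esub> x = x"
    by (simp add: grp_def grp_one circ_F F_def C_cent_left)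
next
  fix x assume x: "x \<in> carrier (grp (carrier G) (circ_n G n))"
  then have xc: "x \<in> carrier G" by (simp add: grp_def)
  have "inv x \<otimes>\<^bsub>grp (carrier G) (circ_n G n)\<^esub> x = \<one>\<^bsub>grp (carrier G) (circ_n G n)\<^esub>"
    using xc by (simp add: grp_def grp_one circ_F F_def C_inv_left)
  moreover have "inv x \<in> carrier (grp (carrier G) (circ_n G n))" using xc by (simp add: grp_def)
  ultimately show "\<exists>y\<in>carrier (grp (carrier G) (circ_n G n)). y \<otimes>\<^bsub>grp (carrier G) (circ_n G n)\<^esub> x = \<one>\<^bsub>grp (carrier G) (circ_n G n)\<^esub>"
    by blast
qed

lemma inv_F: assumes g: "g \<in> carrier G" shows "inv\<^bsub>grp (carrier G) (circ_n G n)\<^esub> g = inv g"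
proof (rule group.inv_equality[OF group_F])
  show "inv g \<otimes>\<^bsub>grp (carrier G) (circ_n G n)\<^esub> g = \<one>\<^bsub>grp (carrier G) (circ_n G n)\<^esub>"
    using g by (simp add: grp_def grp_one circ_F F_def C_inv_left)
qed (use g in \<open>simp_all add: grp_def\<close>)

lemma skew: "skew_brace (carrier G) (circ_n G a) (circ_n G b)"
  unfolding skew_brace_def group_op_def
proof (intro conjI ballI group_F)
  fix g h k assume g: "g \<in> carrier G" and h: "h \<in> carrier G" and k: "k \<in> carrier G"
  have "circ_n G b g (circ_n G a h k) = F b g (F a h k)" using g h k by (simp add: circ_F)
  also have "\<dots> = F a (F a (F b g h) (inv g)) (F b g k)" using g h k by (rule F_skew)
  also have "\<dots> = circ_n G a (circ_n G a (circ_n G b g h) (inv\<^bsub>grp (carrier G) (circ_n G a)\<^esub> g)) (circ_n G b g k)"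
    using g h k by (simp add: circ_F inv_F)
  finally show "circ_n G b g (circ_n G a h k) = circ_n G a (circ_n G a (circ_n G b g h) (inv\<^bsub>grp (carrier G) (circ_n G a)\<^esub> g)) (circ_n G b g k)" .
qed

end

theorem mainTheorem8:
  fixes G :: "('a, 'b) monoid_scheme"
  assumes "group G"
    and "nilpotent_class_le_2 G"
  shows "brace_block (carrier G) (range (circ_n G))"
proof -
  interpret nil2 G
    by (rule nil2.intro[OF assms(1)], rule nil2_axioms.intro)
       (use assms(2) in \<open>auto simp: nilpotent_class_le_2_def\<close>)
  show ?thesis unfolding brace_block_def bi_skew_brace_def by (auto simp: skew)
qed

end
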